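(* Let $F:\mathbb{R}^n\rightrightarrows\mathbb{R}^p$ be a nearly convex set-valued mapping and $\Omega\subset\mathbb{R}^n$ a nearly convex set with $\operatorname{ri}(\operatorname{dom} F)\cap\operatorname{ri}\Omega\neq\emptyset$. Then the restriction $F_\Omega$ is nearly convex and $$\operatorname{ri}(\operatorname{gph} F_\Omega)=\{(x,y)\in\mathbb{R}^n\times\mathbb{R}^p: x\in\operatorname{ri}(\operatorname{dom} F)\cap\operatorname{ri}\Omega,\ y\in\operatorname{ri} F(x)\}.$$
   Context: A set $\Omega\subset\mathbb{R}^k$ is nearly convex if there is a convex set $C$ with $C\subset\Omega\subset\overline{C}$. For an arbitrary set $\Omega$, $\operatorname{ri}\Omega=\{a\in\Omega:\exists\delta>0,\ B(a;\delta)\cap\operatorname{aff}\Omega\subset\Omega\}$. For $F:\mathbb{R}^n\rightrightarrows\mathbb{R}^p$: $\operatorname{dom} F=\{x:F(x)\neq\emptyset\}$, $\operatorname{gph} F=\{(x,y):y\in F(x)\}$; $F$ is nearly convex if $\operatorname{gph} F$ is nearly convex. The restriction of $F$ to $\Omega$ is $F_\Omega(x)=F(x)$ if $x\in\Omega$ and $F_\Omega(x)=\emptyset$ otherwise. *)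

theory Defs
  imports "HOL-Analysis.Analysis"
begin

definition nearly_convex :: "'a::real_normed_vector set \<Rightarrow> bool" where
  "nearly_convex \<Omega> \<longleftrightarrow> (\<exists>C. convex C \<and> C \<subseteq> \<Omega> \<and> \<Omega> \<subseteq> closure C)"

definition ri :: "'a::real_normed_vector set \<Rightarrow> 'a set" where
  "ri \<Omega> = {a \<in> \<Omega>. \<exists>\<delta>>0. ball a \<delta> \<inter> affine hull \<Omega> \<subseteq> \<Omega>}"

definition sv_dom :: "('a \<Rightarrow> 'b set) \<Rightarrow> 'a set" where
  "sv_dom F = {x. F x \<noteq> {}}"

definition gph :: "('a \<Rightarrow> 'b set) \<Rightarrow> ('a \<times> 'b) set" where
  "gph F = {(x, y). y \<in> F x}"

definition nearly_convex_map :: "('a::real_normed_vector \<Rightarrow> 'b::real_normed_vector set) \<Rightarrow> bool" where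
  "nearly_convex_map F \<longleftrightarrow> nearly_convex (gph F)"

definition restrict_map_to :: "('a \<Rightarrow> 'b set) \<Rightarrow> 'a set \<Rightarrow> 'a \<Rightarrow> 'b set" where
  "restrict_map_to F \<Omega> x = (if x \<in> \<Omega> then F x else {})"

end

theory Submission
  imports Defs
begin

lemma ri_eq: "ri S = rel_interior S"
  unfolding ri_def rel_interior_ball by auto

lemma ri_sandwich:
  fixes C S :: "'a::euclidean_space set"
  assumes "convex C" "C \<subseteq> S" "S \<subseteq> closure C"
  shows "rel_interior S = rel_interior C"
proof -
  have h1: "affine hull S = affine hull C"
    by (metis assms(2,3) closure_same_affine_hull hull_mono subset_antisym)
  have "rel_interior C \<subseteq> rel_interior S"
    using rel_interior_mono[OF assms(2)] h1 by simp
  moreover have "rel_interior S \<subseteq> rel_interior (closure C)"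
    using rel_interior_mono[OF assms(3)] h1 by simp
  ultimately show ?thesis using convex_rel_interior_closure[OF assms(1)] by auto
qed

lemma fst_closure: "fst ` closure (C::('a::euclidean_space \<times> 'b::euclidean_space) set) \<subseteq> closure (fst ` C)"
  by (rule continuous_image_closure_subset) (auto intro: continuous_intros)

lemma convex_fiber:
  fixes C :: "('a::real_vector \<times> 'b::real_vector) set"
  assumes "convex C"
  shows "convex {z. (x, z) \<in> C}"
  unfolding convex_def
proof (clarify)
  fix a b :: 'b and u v :: real
  assume h: "(x, a) \<in> C" "(x, b) \<in> C" "0 \<le> u" "0 \<le> v" "u + v = 1"
  have "u *\<^sub>R (x, a) + v *\<^sub>R (x, b) \<in> C"
    using assms h unfolding convex_def by blast
  moreover have "u *\<^sub>R (x, a) + v *\<^sub>R (x, b) = (x, u *\<^sub>R a + v *\<^sub>R b)"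
  proof -
    have "u *\<^sub>R x + v *\<^sub>R x = x" using h(5) by (metis scaleR_left_distrib scaleR_one)
    then show ?thesis by simp
  qed
  ultimately show "(x, u *\<^sub>R a + v *\<^sub>R b) \<in> C" by simp
qed

lemma ri_point:
  fixes C :: "('a::euclidean_space \<times> 'b::euclidean_space) set"
  assumes "convex C" "x \<in> rel_interior (fst ` C)"
  shows "\<exists>z. (x, z) \<in> rel_interior C"
proof -
  define f where "f = (\<lambda>y. {z. (y, z) \<in> C})"
  have dom: "{y. f y \<noteq> {}} = fst ` C"
  proof
    show "{y. f y \<noteq> {}} \<subseteq> fst ` C" unfolding f_def by (auto intro: rev_image_eqI)
    show "fst ` C \<subseteq> {y. f y \<noteq> {}}" unfolding f_def by auto
  qed
  have "x \<in> fst ` C" using assms(2) rel_interior_subset by blast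
  then have ne: "f x \<noteq> {}" using dom by blast
  have cf: "convex (f x)" unfolding f_def using convex_fiber[OF assms(1)] .
  obtain z where z: "z \<in> rel_interior (f x)" using rel_interior_eq_empty[OF cf] ne by blast
  have "(x, z) \<in> rel_interior C \<longleftrightarrow> (x \<in> rel_interior {y. f y \<noteq> {}} \<and> z \<in> rel_interior (f x))"
    by (rule rel_interior_projection[OF assms(1) f_def])
  then have "(x, z) \<in> rel_interior C" using dom assms(2) z by simp
  then show ?thesis by blast
qed

lemma fiber_closure:
  fixes C :: "('a::euclidean_space \<times> 'b::euclidean_space) set"
  assumes "convex C" "x \<in> rel_interior (fst ` C)" "(x, y) \<in> closure C"
  shows "y \<in> closure {z. (x, z) \<in> C}"
proof -
  have aff: "affine ({x} \<times> (UNIV::'b set))"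
    unfolding affine_def by (auto, metis scaleR_left_distrib scaleR_one)
  obtain z where "(x, z) \<in> rel_interior C" using ri_point[OF assms(1,2)] by blast
  then have "rel_interior C \<inter> ({x} \<times> UNIV) \<noteq> {}" by blast
  then have "closure (C \<inter> ({x} \<times> UNIV)) = closure C \<inter> ({x} \<times> UNIV)"
    using convex_affine_closure_Int[OF assms(1) aff] by simp
  moreover have "C \<inter> ({x} \<times> UNIV) = {x} \<times> {z. (x, z) \<in> C}" by auto
  ultimately have "(x, y) \<in> closure ({x} \<times> {z. (x, z) \<in> C})" using assms(3) by auto
  then show ?thesis by (simp add: closure_Times)
qed

theorem theorem3p5:
  fixes F :: "real^'n \<Rightarrow> (real^'p) set" and \<Omega> :: "(real^'n) set"
  assumes "nearly_convex_map F"
    and "nearly_convex \<Omega>"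
    and "ri (sv_dom F) \<inter> ri \<Omega> \<noteq> {}"
  shows "nearly_convex_map (restrict_map_to F \<Omega>)
    \<and> ri (gph (restrict_map_to F \<Omega>)) =
        {(x, y). x \<in> ri (sv_dom F) \<inter> ri \<Omega> \<and> y \<in> ri (F x)}"
proof -
  obtain C where C: "convex C" "C \<subseteq> gph F" "gph F \<subseteq> closure C"
    using assms(1) unfolding nearly_convex_map_def nearly_convex_def by blast
  obtain D where D: "convex D" "D \<subseteq> \<Omega>" "\<Omega> \<subseteq> closure D"
    using assms(2) unfolding nearly_convex_def by blast
  have domF: "sv_dom F = fst ` gph F" unfolding sv_dom_def gph_def by force
  have cfC: "convex (fst ` C)" using C(1) by (simp add: convex_linear_image linear_fst)
  have "fst ` C \<subseteq> sv_dom F" using C(2) domF by blast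
  moreover have "sv_dom F \<subseteq> closure (fst ` C)" using C(3) domF fst_closure by blast
  ultimately have riD: "ri (sv_dom F) = rel_interior (fst ` C)"
    using ri_sandwich[OF cfC] ri_eq by metis
  have riO: "ri \<Omega> = rel_interior D" using ri_sandwich[OF D] ri_eq by metis
  obtain x0 where x0: "x0 \<in> rel_interior (fst ` C)" "x0 \<in> rel_interior D"
    using assms(3) riD riO by blast
  obtain z0 where z0: "(x0, z0) \<in> rel_interior C" using ri_point[OF C(1) x0(1)] by blast
  define E where "E = D \<times> (UNIV :: (real^'p) set)"
  have cE: "convex E" unfolding E_def using D(1) by (simp add: convex_Times)
  have riE: "rel_interior E = rel_interior D \<times> UNIV"
    unfolding E_def using D(1) by (simp add: rel_interior_Times)
  have ne: "rel_interior C \<inter> rel_interior E \<noteq> {}" using z0 x0(2) riE by blast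
  have clI: "closure (C \<inter> E) = closure C \<inter> closure E"
    using closure_Int_convex[OF C(1) cE ne] .
  have riI: "rel_interior (C \<inter> E) = rel_interior C \<inter> rel_interior E"
    using convex_rel_interior_inter_two[OF C(1) cE ne] .
  have gR: "gph (restrict_map_to F \<Omega>) = gph F \<inter> (\<Omega> \<times> UNIV)"
    unfolding gph_def restrict_map_to_def by (auto split: if_splits)
  have s1: "C \<inter> E \<subseteq> gph (restrict_map_to F \<Omega>)" using gR C(2) D(2) E_def by auto
  have s2: "gph (restrict_map_to F \<Omega>) \<subseteq> closure (C \<inter> E)"
    using gR C(3) D(3) clI unfolding E_def by (auto simp: closure_Times)
  have cCE: "convex (C \<inter> E)" using C(1) cE by (rule convex_Int)
  have nc: "nearly_convex_map (restrict_map_to F \<Omega>)"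
    unfolding nearly_convex_map_def nearly_convex_def using cCE s1 s2 by blast
  have riG: "ri (gph (restrict_map_to F \<Omega>)) = rel_interior C \<inter> rel_interior E"
    using ri_sandwich[OF cCE s1 s2] ri_eq riI by metis
  define f where "f = (\<lambda>y. {z. (y, z) \<in> C})"
  have dom: "{y. f y \<noteq> {}} = fst ` C"
  proof
    show "{y. f y \<noteq> {}} \<subseteq> fst ` C" unfolding f_def by (auto intro: rev_image_eqI)
    show "fst ` C \<subseteq> {y. f y \<noteq> {}}" unfolding f_def by auto
  qed
  have fib: "ri (F x) = rel_interior (f x)" if "x \<in> rel_interior (fst ` C)" for x
  proof -
    have cf: "convex (f x)" unfolding f_def using convex_fiber[OF C(1)] .
    have a: "f x \<subseteq> F x" using C(2) unfolding f_def gph_def by auto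
    have b: "F x \<subseteq> closure (f x)"
      using fiber_closure[OF C(1) that] C(3) unfolding f_def gph_def by auto
    show ?thesis using ri_sandwich[OF cf a b] ri_eq by metis
  qed
  have "ri (gph (restrict_map_to F \<Omega>)) =
        {(x, y). x \<in> ri (sv_dom F) \<inter> ri \<Omega> \<and> y \<in> ri (F x)}"
  proof (rule set_eqI, clarify)
    fix x y
    have "(x, y) \<in> rel_interior C \<longleftrightarrow> x \<in> rel_interior (fst ` C) \<and> y \<in> rel_interior (f x)"
      using rel_interior_projection[OF C(1) f_def] dom by simp
    then show "((x, y) \<in> ri (gph (restrict_map_to F \<Omega>))) =
          ((x, y) \<in> {(x, y). x \<in> ri (sv_dom F) \<inter> ri \<Omega> \<and> y \<in> ri (F x)})"
      using riG riE riD riO fib by auto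
  qed
  with nc show ?thesis by blast
qed

end
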